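(* Let $C = c_0c_1\dots c_{m-1}c_0$ and $D=(0)(1)\dots(n-1)(0)$ be reflexive digraph cycles with $D$ non-contractible. From any homomorphism $\phi \in \mathrm{Hom}(C,D)$ there is a path of up edges in $\mathrm{Hom}(C,D)$ to a monotone homomorphism.
   Context: A digraph is a binary relation $\to$ on a finite vertex set; reflexive means every vertex has a loop $uu$. A digraph cycle $C=c_0c_1\dots c_{m-1}c_0$ (indices mod $m$, $m\ge 3$) has underlying graph the cycle with edges $c_ic_{i+1}$; $D=(0)(1)\dots(n-1)(0)$ has vertex set the integers mod $n$. $D$ is non-contractible if it has length at least $4$ or is a directed $3$-cycle. A homomorphism $\phi: C\to D$ satisfies $u\to v\Rightarrow\phi(u)\to\phi(v)$. $\mathrm{Hom}(C,D)$ is the digraph on homomorphisms with $\phi\to\phi'$ iff $\phi(u)\to\phi'(v)$ for every arc $u\to v$ of $C$; adjacency means $\phi\to\phi'$ or $\phi'\to\phi$. For adjacent $\phi,\phi'$, a vertex $c$ moves up if $\phi'(c)=\phi(c)+1$, moves down if $\phi'(c)=\phi(c)-1$; $(\phi,\phi')$ is an up edge if they are adjacent and every vertex that moves, moves up; a path of up edges from $\phi$ to $\phi'$ is a sequence $\phi=\phi_0,\dots,\phi_k=\phi'$ of up edges $(\phi_j,\phi_{j+1})$. Under $\phi$, edge $c_ic_{i+1}$ is increasing, stationary or decreasing as $\phi(c_{i+1})-\phi(c_i)$ is $1,0,-1$ (mod $n$). A homomorphism is monotone if either every edge is increasing or stationary, or every edge is decreasing or stationary (in particular constant maps are monotone).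 *)

theory Defs
  imports Main
begin

text \<open>Vertex i stands for c_i,
  and the successor of i around the cycle is Suc i mod m.\<close>

definition cyc_succ :: "nat \<Rightarrow> nat \<Rightarrow> nat" where
  "cyc_succ m i = Suc i mod m"

definition digraph_cycle :: "nat \<Rightarrow> (nat \<Rightarrow> nat \<Rightarrow> bool) \<Rightarrow> bool" where
  "digraph_cycle m R \<longleftrightarrow> m \<ge> 3
     \<and> (\<forall>u v. R u v \<longrightarrow> u < m \<and> v < m)
     \<and> (\<forall>i<m. R i (cyc_succ m i) \<or> R (cyc_succ m i) i)
     \<and> (\<forall>u v. R u v \<longrightarrow> u = v \<or> v = cyc_succ m u \<or> u = cyc_succ m v)"

definition reflexive_digraph :: "nat \<Rightarrow> (nat \<Rightarrow> nat \<Rightarrow> bool) \<Rightarrow> bool" where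
  "reflexive_digraph m R \<longleftrightarrow> (\<forall>u<m. R u u)"

definition directed_3cycle :: "(nat \<Rightarrow> nat \<Rightarrow> bool) \<Rightarrow> bool" where
  "directed_3cycle S \<longleftrightarrow>
     (\<forall>i<3. S i (cyc_succ 3 i) \<and> \<not> S (cyc_succ 3 i) i)
   \<or> (\<forall>i<3. S (cyc_succ 3 i) i \<and> \<not> S i (cyc_succ 3 i))"

definition non_contractible :: "nat \<Rightarrow> (nat \<Rightarrow> nat \<Rightarrow> bool) \<Rightarrow> bool" where
  "non_contractible n S \<longleftrightarrow> n \<ge> 4 \<or> (n = 3 \<and> directed_3cycle S)"

definition is_hom :: "nat \<Rightarrow> (nat \<Rightarrow> nat \<Rightarrow> bool) \<Rightarrow> nat \<Rightarrow> (nat \<Rightarrow> nat \<Rightarrow> bool)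
    \<Rightarrow> (nat \<Rightarrow> nat) \<Rightarrow> bool" where
  "is_hom m R n S \<phi> \<longleftrightarrow> (\<forall>u<m. \<phi> u < n) \<and> (\<forall>u v. R u v \<longrightarrow> S (\<phi> u) (\<phi> v))"

definition hom_arc :: "(nat \<Rightarrow> nat \<Rightarrow> bool) \<Rightarrow> (nat \<Rightarrow> nat \<Rightarrow> bool)
    \<Rightarrow> (nat \<Rightarrow> nat) \<Rightarrow> (nat \<Rightarrow> nat) \<Rightarrow> bool" where
  "hom_arc R S \<phi> \<psi> \<longleftrightarrow> (\<forall>u v. R u v \<longrightarrow> S (\<phi> u) (\<psi> v))"

definition hom_adjacent :: "(nat \<Rightarrow> nat \<Rightarrow> bool) \<Rightarrow> (nat \<Rightarrow> nat \<Rightarrow> bool)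
    \<Rightarrow> (nat \<Rightarrow> nat) \<Rightarrow> (nat \<Rightarrow> nat) \<Rightarrow> bool" where
  "hom_adjacent R S \<phi> \<psi> \<longleftrightarrow> hom_arc R S \<phi> \<psi> \<or> hom_arc R S \<psi> \<phi>"

definition up_edge :: "nat \<Rightarrow> (nat \<Rightarrow> nat \<Rightarrow> bool) \<Rightarrow> nat \<Rightarrow> (nat \<Rightarrow> nat \<Rightarrow> bool)
    \<Rightarrow> (nat \<Rightarrow> nat) \<Rightarrow> (nat \<Rightarrow> nat) \<Rightarrow> bool" where
  "up_edge m R n S \<phi> \<psi> \<longleftrightarrow> is_hom m R n S \<phi> \<and> is_hom m R n S \<psi>
     \<and> hom_adjacent R S \<phi> \<psi>
     \<and> (\<forall>c<m. \<psi> c \<noteq> \<phi> c \<longrightarrow> \<psi> c = (\<phi> c + 1) mod n)"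

definition monotone_hom :: "nat \<Rightarrow> nat \<Rightarrow> (nat \<Rightarrow> nat) \<Rightarrow> bool" where
  "monotone_hom m n \<phi> \<longleftrightarrow>
     (\<forall>i<m. (\<phi> (cyc_succ m i) + n - \<phi> i) mod n \<in> {0, 1 mod n})
   \<or> (\<forall>i<m. (\<phi> (cyc_succ m i) + n - \<phi> i) mod n \<in> {0, (n - 1) mod n})"

end

theory Submission
  imports Defs
begin

lemma hom_class:
  assumes C: "digraph_cycle m R" and D: "digraph_cycle n S" and h: "is_hom m R n S \<phi>" and i: "i < m"
  shows "\<phi> (cyc_succ m i) = \<phi> i \<or> \<phi> (cyc_succ m i) = Suc (\<phi> i) mod n
         \<or> \<phi> i = Suc (\<phi> (cyc_succ m i)) mod n"
proof -
  from C i have "R i (cyc_succ m i) \<or> R (cyc_succ m i) i" by (simp add: digraph_cycle_def)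
  then have "S (\<phi> i) (\<phi> (cyc_succ m i)) \<or> S (\<phi> (cyc_succ m i)) (\<phi> i)"
    using h by (auto simp: is_hom_def)
  moreover have Sst: "\<And>u v. S u v \<Longrightarrow> u = v \<or> v = Suc u mod n \<or> u = Suc v mod n"
    using D unfolding digraph_cycle_def cyc_succ_def by blast
  ultimately show ?thesis by (metis Sst)
qed

lemma seg_move:
  assumes C: "digraph_cycle m R" and D: "digraph_cycle n S" and Dr: "reflexive_digraph n S"
    and h: "is_hom m R n S \<phi>"
    and A: "\<forall>c\<in>Seg. c < m \<and> \<phi> c = x"
    and B: "\<forall>u\<in>Seg. \<forall>v<m. v \<notin> Seg \<longrightarrow> (v = cyc_succ m u \<or> u = cyc_succ m v) \<longrightarrow> \<phi> v = Suc x mod n"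
    and p: "p < m" "cyc_succ m p \<in> Seg" "\<phi> p = Suc x mod n"
  shows "\<exists>\<psi>. up_edge m R n S \<phi> \<psi> \<and>
    card {i. i < m \<and> \<psi> (cyc_succ m i) \<noteq> \<psi> i} < card {i. i < m \<and> \<phi> (cyc_succ m i) \<noteq> \<phi> i}"
proof -
  have n3: "n \<ge> 3" using D by (simp add: digraph_cycle_def)
  define x' where "x' = Suc x mod n"
  have xn0: "cyc_succ m p < m" "\<phi> (cyc_succ m p) = x" using A p(2) by auto
  have xn: "x < n" using h xn0 unfolding is_hom_def by auto
  have x'n: "x' < n" using n3 by (simp add: x'_def)
  have xx': "x \<noteq> x'" using xn n3 unfolding x'_def
    by (cases "Suc x = n") auto
  define \<psi> where "\<psi> = (\<lambda>c. if c \<in> Seg then x' else \<phi> c)"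
  have Sx': "S x' x'" using Dr x'n by (simp add: reflexive_digraph_def)
  have k1: "\<phi> v = x'" if "R u v" "u \<in> Seg" "v \<notin> Seg" for u v
  proof -
    have "u < m" "v < m" "u = v \<or> v = cyc_succ m u \<or> u = cyc_succ m v"
      using C that(1) by (auto simp: digraph_cycle_def)
    then have "v = cyc_succ m u \<or> u = cyc_succ m v" using that by auto
    then show ?thesis using B that(2,3) \<open>v < m\<close> unfolding x'_def by blast
  qed
  have k2: "\<phi> u = x'" if "R u v" "v \<in> Seg" "u \<notin> Seg" for u v
  proof -
    have "u < m" "v < m" "u = v \<or> v = cyc_succ m u \<or> u = cyc_succ m v"
      using C that(1) by (auto simp: digraph_cycle_def)
    then have "v = cyc_succ m u \<or> u = cyc_succ m v" using that by auto
    then show ?thesis using B that(2,3) \<open>u < m\<close> unfolding x'_def by blast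
  qed
  have hp: "is_hom m R n S \<psi>"
    unfolding is_hom_def
  proof (intro conjI allI impI)
    fix u assume "u < m" then show "\<psi> u < n" using h x'n by (auto simp: \<psi>_def is_hom_def)
  next
    fix u v assume r: "R u v"
    show "S (\<psi> u) (\<psi> v)"
      using r h k1[OF r] k2[OF r] Sx' by (auto simp: \<psi>_def is_hom_def)
  qed
  have ex: "S x x' \<or> S x' x" using D xn unfolding digraph_cycle_def cyc_succ_def x'_def by blast
  have adj: "hom_adjacent R S \<phi> \<psi>"
  proof (cases "S x x'")
    case True
    have "hom_arc R S \<phi> \<psi>" unfolding hom_arc_def
    proof (intro allI impI)
      fix u v assume r: "R u v"
      show "S (\<phi> u) (\<psi> v)"
        using r h k2[OF r] A True Sx' by (cases "u \<in> Seg"; cases "v \<in> Seg") (auto simp: \<psi>_def is_hom_def)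
    qed
    then show ?thesis by (simp add: hom_adjacent_def)
  next
    case False
    then have F: "S x' x" using ex by blast
    have "hom_arc R S \<psi> \<phi>" unfolding hom_arc_def
    proof (intro allI impI)
      fix u v assume r: "R u v"
      show "S (\<psi> u) (\<phi> v)"
        using r h k1[OF r] A F Sx' by (cases "u \<in> Seg"; cases "v \<in> Seg") (auto simp: \<psi>_def is_hom_def)
    qed
    then show ?thesis by (simp add: hom_adjacent_def)
  qed
  have up: "up_edge m R n S \<phi> \<psi>"
    unfolding up_edge_def using h hp adj A by (auto simp: \<psi>_def x'_def mod_Suc_eq)
  have sub: "{i. i < m \<and> \<psi> (cyc_succ m i) \<noteq> \<psi> i} \<subseteq> {i. i < m \<and> \<phi> (cyc_succ m i) \<noteq> \<phi> i}"
  proof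
    fix i assume "i \<in> {i. i < m \<and> \<psi> (cyc_succ m i) \<noteq> \<psi> i}"
    then have i: "i < m" "\<psi> (cyc_succ m i) \<noteq> \<psi> i" by auto
    have sm: "cyc_succ m i < m" using i(1) by (simp add: cyc_succ_def)
    show "i \<in> {i. i < m \<and> \<phi> (cyc_succ m i) \<noteq> \<phi> i}"
      using i sm A B unfolding \<psi>_def x'_def
      by (cases "i \<in> Seg"; cases "cyc_succ m i \<in> Seg") auto
  qed
  have pS: "p \<notin> Seg" using A p(3) xx' x'_def by auto
  have "p \<in> {i. i < m \<and> \<phi> (cyc_succ m i) \<noteq> \<phi> i}" using p A xx' x'_def by auto
  moreover have "p \<notin> {i. i < m \<and> \<psi> (cyc_succ m i) \<noteq> \<psi> i}" using p pS x'_def by (auto simp: \<psi>_def)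
  ultimately have "{i. i < m \<and> \<psi> (cyc_succ m i) \<noteq> \<psi> i} \<subset> {i. i < m \<and> \<phi> (cyc_succ m i) \<noteq> \<phi> i}"
    using sub by blast
  then have "card {i. i < m \<and> \<psi> (cyc_succ m i) \<noteq> \<psi> i} < card {i. i < m \<and> \<phi> (cyc_succ m i) \<noteq> \<phi> i}"
    by (rule psubset_card_mono[rotated]) simp
  then show ?thesis using up by blast
qed


lemma step_up: "a < n \<Longrightarrow> 3 \<le> n \<Longrightarrow> b = Suc a mod n \<Longrightarrow> (b + n - a) mod n = 1 mod n"
proof (cases "Suc a = n")
  case False
  assume "a < n" "3 \<le> n" "b = Suc a mod n"
  then have "b + n - a = 1 + 1 * n" using False by simp
  then show ?thesis by (metis mod_mult_self1)
qed auto

lemma step_down: "b < n \<Longrightarrow> 3 \<le> n \<Longrightarrow> a = Suc b mod n \<Longrightarrow> (b + n - a) mod n = (n - 1) mod n"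
proof (cases "Suc b = n")
  case True
  assume "b < n" "3 \<le> n" "a = Suc b mod n"
  then have "a = 0" using True by simp
  then have "b + n - a = (n - 1) + 1 * n" using True by simp
  then show ?thesis by (metis mod_mult_self1)
next
  case False
  assume "b < n" "3 \<le> n" "a = Suc b mod n"
  then show ?thesis using False by simp
qed

lemma suc_mod_cancel:
  assumes m: "(0::nat) < m" and e: "Suc a mod m = Suc b mod m" shows "a mod m = b mod m"
proof -
  have "\<And>c. c mod m = (Suc c mod m + (m - 1)) mod m"
  proof -
    fix c
    have "Suc c + (m - 1) = c + m" using m by simp
    then have "c mod m = (Suc c + (m - 1)) mod m" by simp
    also have "\<dots> = (Suc c mod m + (m - 1)) mod m" by (rule mod_add_left_eq[symmetric])
    finally show "c mod m = (Suc c mod m + (m - 1)) mod m" .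
  qed
  then show ?thesis using e by metis
qed

lemma valley:
  assumes C: "digraph_cycle m R" and D: "digraph_cycle n S" and h: "is_hom m R n S \<phi>"
    and nm: "\<not> monotone_hom m n \<phi>"
  shows "\<exists>Seg x p. (\<forall>c\<in>Seg. c < m \<and> \<phi> c = x)
    \<and> (\<forall>u\<in>Seg. \<forall>v<m. v \<notin> Seg \<longrightarrow> (v = cyc_succ m u \<or> u = cyc_succ m v) \<longrightarrow> \<phi> v = Suc x mod n)
    \<and> p < m \<and> cyc_succ m p \<in> Seg \<and> \<phi> p = Suc x mod n"
proof -
  have n3: "n \<ge> 3" using D by (simp add: digraph_cycle_def)
  have m0: "m > 0" using C by (simp add: digraph_cycle_def)
  have rng: "\<And>i. i < m \<Longrightarrow> \<phi> i < n" using h by (simp add: is_hom_def)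
  have sm: "\<And>i. i < m \<Longrightarrow> cyc_succ m i < m" using m0 by (simp add: cyc_succ_def)
  define up where "up k \<longleftrightarrow> \<phi> (cyc_succ m k) = Suc (\<phi> k) mod n" for k
  define dn where "dn k \<longleftrightarrow> \<phi> k = Suc (\<phi> (cyc_succ m k)) mod n" for k
  have cls: "\<And>i. i < m \<Longrightarrow> \<phi> (cyc_succ m i) = \<phi> i \<or> up i \<or> dn i"
    using hom_class[OF C D h] unfolding up_def dn_def by blast
  have "\<exists>i<m. dn i"
  proof (rule ccontr)
    assume "\<not> (\<exists>i<m. dn i)"
    then have "\<forall>i<m. (\<phi> (cyc_succ m i) + n - \<phi> i) mod n \<in> {0, 1 mod n}"
      using cls step_up[OF rng n3] sm unfolding up_def by fastforce
    then show False using nm unfolding monotone_hom_def by blast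
  qed
  then obtain i where i: "i < m" "dn i" by blast
  have "\<exists>j<m. up j"
  proof (rule ccontr)
    assume "\<not> (\<exists>j<m. up j)"
    then have "\<forall>i<m. (\<phi> (cyc_succ m i) + n - \<phi> i) mod n \<in> {0, (n - 1) mod n}"
      using cls step_down[OF rng n3] sm unfolding dn_def by fastforce
    then show False using nm unfolding monotone_hom_def by blast
  qed
  then obtain j where j: "j < m" "up j" by blast
  define Q where "Q t \<longleftrightarrow> 0 < t \<and> (\<exists>p<m. dn p \<and> up ((p + t) mod m))" for t
  have "(i + (j + m - i)) mod m = j" using i j by simp
  then have "Q (j + m - i)" unfolding Q_def using i j by auto
  then obtain t where t: "Q t" and tmin: "\<And>s. s < t \<Longrightarrow> \<not> Q s"
    using exists_least_iff[of Q] by blast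
  then obtain p where p: "p < m" "dn p" "up ((p + t) mod m)" "0 < t" unfolding Q_def by blast
  have sc: "\<And>s. cyc_succ m ((p + s) mod m) = (p + Suc s) mod m"
    by (simp add: cyc_succ_def mod_Suc_eq)
  have flat: "\<phi> ((p + Suc s) mod m) = \<phi> ((p + s) mod m)" if s: "0 < s" "s < t" for s
  proof -
    have "(p + s) mod m < m" using m0 by simp
    from cls[OF this] consider "\<phi> (cyc_succ m ((p + s) mod m)) = \<phi> ((p + s) mod m)"
      | "up ((p + s) mod m)" | "dn ((p + s) mod m)" by blast
    then show ?thesis
    proof cases
      case 1 then show ?thesis by (simp add: sc)
    next
      case 2
      then have "Q s" unfolding Q_def using p s by auto
      then show ?thesis using tmin s by blast
    next
      case 3
      have "((p + s) mod m + (t - s)) mod m = ((p + s) + (t - s)) mod m"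
        by (rule mod_add_left_eq)
      also have "(p + s) + (t - s) = p + t" using s by simp
      finally have "((p + s) mod m + (t - s)) mod m = (p + t) mod m" .
      then have "Q (t - s)" unfolding Q_def using p s 3 m0
        by (intro conjI exI[of _ "(p + s) mod m"]) auto
      then show ?thesis using tmin s by simp
    qed
  qed
  define x where "x = \<phi> ((p + 1) mod m)"
  have vals: "1 \<le> s \<Longrightarrow> s \<le> t \<Longrightarrow> \<phi> ((p + s) mod m) = x" for s
  proof (induction s)
    case 0 then show ?case by simp
  next
    case (Suc s)
    show ?case
    proof (cases "s = 0")
      case True then show ?thesis by (simp add: x_def)
    next
      case False
      then show ?thesis using Suc flat[of s] by simp
    qed
  qed
  define Seg where "Seg = {(p + s) mod m | s. 1 \<le> s \<and> s \<le> t}"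
  have A: "\<forall>c\<in>Seg. c < m \<and> \<phi> c = x" unfolding Seg_def using vals m0 by auto
  have p1: "cyc_succ m p = (p + 1) mod m" by (simp add: cyc_succ_def)
  have pS: "cyc_succ m p \<in> Seg" unfolding p1 Seg_def using p by (intro CollectI exI[of _ 1]) auto
  have px: "\<phi> p = Suc x mod n" using p(2) unfolding dn_def p1 x_def by simp
  have B: "\<forall>u\<in>Seg. \<forall>v<m. v \<notin> Seg \<longrightarrow> (v = cyc_succ m u \<or> u = cyc_succ m v) \<longrightarrow> \<phi> v = Suc x mod n"
  proof (intro ballI allI impI)
    fix u v assume u: "u \<in> Seg" and v: "v < m" "v \<notin> Seg" and e: "v = cyc_succ m u \<or> u = cyc_succ m v"
    from u obtain s where s: "u = (p + s) mod m" "1 \<le> s" "s \<le> t" unfolding Seg_def by blast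
    from e show "\<phi> v = Suc x mod n"
    proof
      assume ve: "v = cyc_succ m u"
      then have ve': "v = (p + Suc s) mod m" using s sc by simp
      show ?thesis
      proof (cases "s < t")
        case True
        then have "v \<in> Seg" unfolding Seg_def ve' by (intro CollectI exI[of _ "Suc s"]) auto
        then show ?thesis using v by blast
      next
        case False
        then have "s = t" using s by simp
        then show ?thesis using p(3) vals[of t] p(4) ve s unfolding up_def by simp
      qed
    next
      assume ue: "u = cyc_succ m v"
      then have "Suc v mod m = Suc (p + (s - 1)) mod m" using s unfolding cyc_succ_def by simp
      then have "v mod m = (p + (s - 1)) mod m" by (rule suc_mod_cancel[OF m0])
      then have vm: "v = (p + (s - 1)) mod m" using v by simp
      show ?thesis
      proof (cases "s = 1")
        case True
        then have "v = p" using vm p by simp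
        then show ?thesis using px by simp
      next
        case False
        then have "v \<in> Seg" unfolding Seg_def vm using s by (intro CollectI exI[of _ "s - 1"]) auto
        then show ?thesis using v by blast
      qed
    qed
  qed
  show ?thesis using A B pS px p(1) by blast
qed

lemma main:
  assumes C: "digraph_cycle m R" and D: "digraph_cycle n S" and Dr: "reflexive_digraph n S"
    and h: "is_hom m R n S \<phi>"
  shows "\<exists>k (f :: nat \<Rightarrow> nat \<Rightarrow> nat). f 0 = \<phi>
           \<and> (\<forall>j<k. up_edge m R n S (f j) (f (Suc j)))
           \<and> monotone_hom m n (f k)"
  using h
proof (induction "card {i. i < m \<and> \<phi> (cyc_succ m i) \<noteq> \<phi> i}" arbitrary: \<phi> rule: less_induct)
  case less
  show ?case
  proof (cases "monotone_hom m n \<phi>")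
    case True
    then show ?thesis by (intro exI[of _ 0] exI[of _ "\<lambda>_. \<phi>"]) simp
  next
    case False
    obtain Seg x p where
      A: "\<forall>c\<in>Seg. c < m \<and> \<phi> c = x"
      and B: "\<forall>u\<in>Seg. \<forall>v<m. v \<notin> Seg \<longrightarrow> (v = cyc_succ m u \<or> u = cyc_succ m v) \<longrightarrow> \<phi> v = Suc x mod n"
      and P: "p < m" "cyc_succ m p \<in> Seg" "\<phi> p = Suc x mod n"
      using valley[OF C D less.prems False] by blast
    obtain \<psi> where up: "up_edge m R n S \<phi> \<psi>"
      and lt: "card {i. i < m \<and> \<psi> (cyc_succ m i) \<noteq> \<psi> i} < card {i. i < m \<and> \<phi> (cyc_succ m i) \<noteq> \<phi> i}"
      using seg_move[OF C D Dr less.prems A B P] by blast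
    have hp: "is_hom m R n S \<psi>" using up by (simp add: up_edge_def)
    obtain k f where f: "f 0 = \<psi>" "\<forall>j<k. up_edge m R n S (f j) (f (Suc j))" "monotone_hom m n (f k)"
      using less.hyps[OF lt hp] by blast
    define g where "g j = (if j = 0 then \<phi> else f (j - 1))" for j
    have "\<forall>j<Suc k. up_edge m R n S (g j) (g (Suc j))"
    proof (intro allI impI)
      fix j assume "j < Suc k"
      then show "up_edge m R n S (g j) (g (Suc j))"
        using f up by (cases j) (auto simp: g_def)
    qed
    moreover have "g 0 = \<phi>" "monotone_hom m n (g (Suc k))" using f by (auto simp: g_def)
    ultimately show ?thesis by blast
  qed
qed

theorem corollary2p3:
  fixes m n :: nat and R S :: "nat \<Rightarrow> nat \<Rightarrow> bool" and \<phi> :: "nat \<Rightarrow> nat"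
  assumes "digraph_cycle m R" and "reflexive_digraph m R"
    and "digraph_cycle n S" and "reflexive_digraph n S"
    and "non_contractible n S"
    and "is_hom m R n S \<phi>"
  shows "\<exists>k (f :: nat \<Rightarrow> nat \<Rightarrow> nat). f 0 = \<phi>
           \<and> (\<forall>j<k. up_edge m R n S (f j) (f (Suc j)))
           \<and> monotone_hom m n (f k)"
  using main[OF assms(1) assms(3) assms(4) assms(6)] .

end
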